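(* (a) Let $\phi$ be a tree formula over $A$, let $\Psi$ be the set of forest formulas of $\phi$, and suppose $\Psi$ is recognized by a homomorphism $\alpha:A^{\Delta}\to(H,V)$. Then the language defined by $\mathsf{EX}\phi$ is recognized by a homomorphism $\alpha\otimes\beta:A^{\Delta}\to(H,V)\circ(H',V')$ for some 1-definite homomorphism $\beta:(A\times H)^{\Delta}\to(H',V')$. (b) Suppose $L\subseteq H_A$ is recognized by a homomorphism $\alpha\otimes\beta:A^{\Delta}\to(H,V)\circ(H',V')$, where $\beta:(A\times H)^{\Delta}\to(H',V')$ is 1-definite, and suppose every language recognized by $\alpha$ is defined by a formula in some set $\Psi$ of forest formulas. Then $L$ is a boolean combination of languages of the form $L_\psi$ and $L_{\mathsf{EX}(a\wedge\psi)}$ with $\psi\in\Psi$ and $a\in A$.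
   Context: $A^{\Delta}=(H_A,V_A)$: free forest algebra over finite alphabet $A$ ($H_A$ forests = finite ordered sequences of finite ordered $A$-labelled trees under concatenation; $V_A$ contexts with one hole, acting by substitution); $as$ is the tree with root $a$ and child forest $s$. A forest algebra: additive monoid $H$, monoid $V$ acting faithfully on the left, containing $g\mapsto g+h$, $g\mapsto h+g$; finite forest algebras are assumed to have $H$ idempotent and commutative. A homomorphism $\gamma$ recognizes $L\subseteq H_A$ if $L=\gamma^{-1}(X)$ for some $X$. Wreath product: $(H,V)\circ(H',V')=(H\times H',V\times V'^{H})$, $(v,f)(h,h')=(vh,f(h)h')$; $\alpha\otimes\beta$ maps $a$ to $(\alpha(a),h\mapsto\beta(a,h))$, so that $\alpha\otimes\beta(s)=(\alpha(s),\beta(s^\alpha))$ where $s^\alpha$ relabels each node with subtree $at$ by $(a,\alpha(t))$. $\beta$ is 1-definite if $\beta(s)$ depends only on the set of labels of root nodes of $s$. Logic: tree and forest formulas are defined mutually: $\mathbf T$ is a forest formula; each $a\in A$ is a tree formula; forest formulas are tree formulas; both classes are closed under boolean operations; for a tree formula $\phi$, $\mathsf{EF}\phi$ and $\mathsf{EX}\phi$ are forest formulas. Semantics: all forests satisfy $\mathbf T$; $as\models_t a$; for a forest formula $\phi$, $as\models_t\phi$ iff $s\models\phi$; booleans usual; $s\models\mathsf{EF}\phi$ iff some subtree rooted at a node of $s$ satisfies $\phi$ as a tree; $s\models\mathsf{EX}\phi$ iff some subtree rooted at a root node of $s$ satisfies $\phi$. $L_\psi=\{s\in H_A:s\models\psi\}$.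 Every tree formula $\phi$ can be written as $\bigvee_{a\in A}(a\wedge\psi_a)$ with forest formulas $\psi_a$; $\Psi=\{\psi_a:a\in A\}$ is the set of forest formulas of $\phi$. A homomorphism recognizes $\Psi$ if $\alpha(s)$ determines exactly which formulas of $\Psi$ are satisfied by $s$. *)

theory Defs
  imports Main "HOL-Library.FuncSet"
begin

datatype 'a tree = Node 'a "'a tree list"
type_synonym 'a forest = "'a tree list"

fun root :: "'a tree \<Rightarrow> 'a" where "root (Node a s) = a"
fun children :: "'a tree \<Rightarrow> 'a forest" where "children (Node a s) = s"

fun labels_f :: "'a forest \<Rightarrow> 'a set" where
  "labels_f [] = {}"
| "labels_f (Node a s # ts) = insert a (labels_f s \<union> labels_f ts)"

definition roots :: "'a forest \<Rightarrow> 'a set" where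
  "roots s = root ` set s"

fun subtrees_f :: "'a forest \<Rightarrow> 'a tree set" where
  "subtrees_f [] = {}"
| "subtrees_f (Node a s # ts) = insert (Node a s) (subtrees_f s \<union> subtrees_f ts)"

text \<open>A forest algebra (H,V): H with zero and plus; V is represented (faithfully)
  as a set of extensional functions H \<rightarrow> H, composition being function composition.\<close>
record 'h falg =
  Hc :: "'h set"
  zro :: 'h
  pls :: "'h \<Rightarrow> 'h \<Rightarrow> 'h"
  Vc :: "('h \<Rightarrow> 'h) set"

definition forest_algebra :: "'h falg \<Rightarrow> bool" where
  "forest_algebra F \<longleftrightarrow>
     zro F \<in> Hc F \<and>
     (\<forall>g\<in>Hc F. \<forall>h\<in>Hc F. pls F g h \<in> Hc F) \<and>
     (\<forall>f\<in>Hc F. \<forall>g\<in>Hc F. \<forall>h\<in>Hc F. pls F (pls F f g) h = pls F f (pls F g h)) \<and>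
     (\<forall>h\<in>Hc F. pls F (zro F) h = h \<and> pls F h (zro F) = h) \<and>
     Vc F \<subseteq> (Hc F \<rightarrow>\<^sub>E Hc F) \<and>
     restrict id (Hc F) \<in> Vc F \<and>
     (\<forall>v\<in>Vc F. \<forall>w\<in>Vc F. compose (Hc F) v w \<in> Vc F) \<and>
     (\<forall>h\<in>Hc F. restrict (\<lambda>g. pls F g h) (Hc F) \<in> Vc F \<and>
                restrict (\<lambda>g. pls F h g) (Hc F) \<in> Vc F)"

definition finite_forest_algebra :: "'h falg \<Rightarrow> bool" where
  "finite_forest_algebra F \<longleftrightarrow> forest_algebra F \<and> finite (Hc F) \<and>
     (\<forall>h\<in>Hc F. pls F h h = h) \<and> (\<forall>g\<in>Hc F. \<forall>h\<in>Hc F. pls F g h = pls F h g)"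

text \<open>A homomorphism from the free forest algebra over alphabet A into F is determined
  by the images g a \<in> V of the generators a\<box>, a \<in> A.\<close>
definition hom :: "'h falg \<Rightarrow> ('a \<Rightarrow> 'h \<Rightarrow> 'h) \<Rightarrow> 'a set \<Rightarrow> bool" where
  "hom F g A \<longleftrightarrow> (\<forall>a\<in>A. g a \<in> Vc F)"

fun ev :: "'h falg \<Rightarrow> ('a \<Rightarrow> 'h \<Rightarrow> 'h) \<Rightarrow> 'a forest \<Rightarrow> 'h" where
  "ev F g [] = zro F"
| "ev F g (Node a s # ts) = pls F (g a (ev F g s)) (ev F g ts)"

definition recognizes :: "'h falg \<Rightarrow> ('a \<Rightarrow> 'h \<Rightarrow> 'h) \<Rightarrow> 'a forest set \<Rightarrow> bool" where
  "recognizes F g L \<longleftrightarrow> (\<exists>X. L = ev F g -` X)"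

definition one_definite :: "'h2 falg \<Rightarrow> 'h set \<Rightarrow> ('a \<times> 'h \<Rightarrow> 'h2 \<Rightarrow> 'h2) \<Rightarrow> bool" where
  "one_definite F' H \<beta> \<longleftrightarrow>
     (\<forall>s t. labels_f s \<subseteq> UNIV \<times> H \<longrightarrow> labels_f t \<subseteq> UNIV \<times> H \<longrightarrow>
            roots s = roots t \<longrightarrow> ev F' \<beta> s = ev F' \<beta> t)"

text \<open>Wreath product (H,V) o (H',V') = (H x H', V x V'^H).\<close>
definition wreath :: "'h falg \<Rightarrow> 'h2 falg \<Rightarrow> ('h \<times> 'h2) falg" where
  "wreath F F' =
    \<lparr> Hc = Hc F \<times> Hc F',
      zro = (zro F, zro F'),
      pls = (\<lambda>(g, g') (h, h'). (pls F g h, pls F' g' h')),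
      Vc = {restrict (\<lambda>(h, h'). (v h, f h h')) (Hc F \<times> Hc F') | v f.
              v \<in> Vc F \<and> f \<in> Hc F \<rightarrow> Vc F'} \<rparr>"

definition tensor :: "'h falg \<Rightarrow> 'h2 falg \<Rightarrow> ('a \<Rightarrow> 'h \<Rightarrow> 'h) \<Rightarrow> ('a \<times> 'h \<Rightarrow> 'h2 \<Rightarrow> 'h2)
                      \<Rightarrow> 'a \<Rightarrow> ('h \<times> 'h2 \<Rightarrow> 'h \<times> 'h2)" where
  "tensor F F' \<alpha> \<beta> a = restrict (\<lambda>(h, h'). (\<alpha> a h, \<beta> (a, h) h')) (Hc F \<times> Hc F')"

datatype 'a fml = TT | Lab 'a | Neg "'a fml" | Conj "'a fml" "'a fml" | Disj "'a fml" "'a fml"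
  | EFm "'a fml" | EXm "'a fml"

text \<open>Every formula of this syntax is a tree formula; forest formulas are those in which
  letters occur only under EFm / EXm.\<close>
fun is_forest :: "'a fml \<Rightarrow> bool" where
  "is_forest TT = True"
| "is_forest (Lab a) = False"
| "is_forest (Neg \<phi>) = is_forest \<phi>"
| "is_forest (Conj \<phi> \<psi>) = (is_forest \<phi> \<and> is_forest \<psi>)"
| "is_forest (Disj \<phi> \<psi>) = (is_forest \<phi> \<and> is_forest \<psi>)"
| "is_forest (EFm \<phi>) = True"
| "is_forest (EXm \<phi>) = True"

text \<open>Tree semantics (a forest formula holds at the tree as iff it holds at s).\<close>
fun sat_t :: "'a fml \<Rightarrow> 'a tree \<Rightarrow> bool" where
  "sat_t TT t = True"
| "sat_t (Lab b) t = (root t = b)"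
| "sat_t (Neg \<phi>) t = (\<not> sat_t \<phi> t)"
| "sat_t (Conj \<phi> \<psi>) t = (sat_t \<phi> t \<and> sat_t \<psi> t)"
| "sat_t (Disj \<phi> \<psi>) t = (sat_t \<phi> t \<or> sat_t \<psi> t)"
| "sat_t (EFm \<phi>) t = (\<exists>u\<in>subtrees_f (children t). sat_t \<phi> u)"
| "sat_t (EXm \<phi>) t = (\<exists>u\<in>set (children t). sat_t \<phi> u)"

text \<open>Forest semantics (only meaningful for forest formulas).\<close>
fun sat_f :: "'a fml \<Rightarrow> 'a forest \<Rightarrow> bool" where
  "sat_f TT s = True"
| "sat_f (Lab b) s = False"
| "sat_f (Neg \<phi>) s = (\<not> sat_f \<phi> s)"
| "sat_f (Conj \<phi> \<psi>) s = (sat_f \<phi> s \<and> sat_f \<psi> s)"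
| "sat_f (Disj \<phi> \<psi>) s = (sat_f \<phi> s \<or> sat_f \<psi> s)"
| "sat_f (EFm \<phi>) s = (\<exists>u\<in>subtrees_f s. sat_t \<phi> u)"
| "sat_f (EXm \<phi>) s = (\<exists>u\<in>set s. sat_t \<phi> u)"

definition Lang :: "'a fml \<Rightarrow> 'a forest set" where
  "Lang \<psi> = {s. sat_f \<psi> s}"

inductive_set bool_comb :: "'b set set \<Rightarrow> 'b set set" for B where
  base: "X \<in> B \<Longrightarrow> X \<in> bool_comb B"
| compl: "X \<in> bool_comb B \<Longrightarrow> - X \<in> bool_comb B"
| inter: "X \<in> bool_comb B \<Longrightarrow> Y \<in> bool_comb B \<Longrightarrow> X \<inter> Y \<in> bool_comb B"
| union: "X \<in> bool_comb B \<Longrightarrow> Y \<in> bool_comb B \<Longrightarrow> X \<union> Y \<in> bool_comb B"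

end

theory Submission
  imports Defs
begin

fun rl :: "'h falg \<Rightarrow> ('a \<Rightarrow> 'h \<Rightarrow> 'h) \<Rightarrow> 'a forest \<Rightarrow> ('a \<times> 'h) forest" where
  "rl F \<alpha> [] = []"
| "rl F \<alpha> (Node a u # ts) = Node (a, ev F \<alpha> u) (rl F \<alpha> u) # rl F \<alpha> ts"

lemma fa_zro: "forest_algebra F \<Longrightarrow> zro F \<in> Hc F"
  unfolding forest_algebra_def by (elim conjE)

lemma fa_pls: "forest_algebra F \<Longrightarrow> g \<in> Hc F \<Longrightarrow> h \<in> Hc F \<Longrightarrow> pls F g h \<in> Hc F"
  unfolding forest_algebra_def by (elim conjE) blast

lemma fa_V: "forest_algebra F \<Longrightarrow> Vc F \<subseteq> Hc F \<rightarrow>\<^sub>E Hc F"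
  unfolding forest_algebra_def by (elim conjE)

lemma ev_closed:
  "forest_algebra F \<Longrightarrow> (\<forall>x\<in>labels_f s. \<forall>h\<in>Hc F. g x h \<in> Hc F) \<Longrightarrow> ev F g s \<in> Hc F"
proof (induction F g s rule: ev.induct)
  case (1 F g)
  then show ?case by (simp add: fa_zro)
next
  case (2 F g a s ts)
  have "ev F g s \<in> Hc F" using 2 by simp
  moreover have "ev F g ts \<in> Hc F" using 2 by simp
  ultimately show ?case using 2 by (simp add: fa_pls)
qed

lemma hom_closed:
  assumes "forest_algebra F" "hom F g A" "a \<in> A" "h \<in> Hc F"
  shows "g a h \<in> Hc F"
proof -
  have "g a \<in> Vc F" using assms(2,3) by (simp add: hom_def)
  then have "g a \<in> Hc F \<rightarrow>\<^sub>E Hc F" using fa_V[OF assms(1)] by (rule subsetD[rotated])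
  then show ?thesis using assms(4) by (rule PiE_mem)
qed

lemma labels_rl:
  "forest_algebra F \<Longrightarrow> \<forall>a. \<forall>h\<in>Hc F. \<alpha> a h \<in> Hc F \<Longrightarrow> labels_f (rl F \<alpha> s) \<subseteq> UNIV \<times> Hc F"
proof (induction F \<alpha> s rule: rl.induct)
  case (1 F \<alpha>)
  then show ?case by simp
next
  case (2 F \<alpha> a u ts)
  have "\<forall>x\<in>labels_f u. \<forall>h\<in>Hc F. \<alpha> x h \<in> Hc F" using 2(4) by blast
  then have e: "ev F \<alpha> u \<in> Hc F" by (rule ev_closed[OF 2(3)])
  have i1: "labels_f (rl F \<alpha> u) \<subseteq> UNIV \<times> Hc F" by (rule 2(1)[OF 2(3,4)])
  have i2: "labels_f (rl F \<alpha> ts) \<subseteq> UNIV \<times> Hc F" by (rule 2(2)[OF 2(3,4)])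
  show ?case using e i1 i2 by simp
qed

lemma roots_rl: "roots (rl F \<alpha> s) = {(a, ev F \<alpha> u) | a u. Node a u \<in> set s}"
proof (induction F \<alpha> s rule: rl.induct)
  case (1 F \<alpha>)
  then show ?case by (simp add: roots_def)
next
  case (2 F \<alpha> a u ts)
  then show ?case by (auto simp add: roots_def)
qed

lemma ev_wreath:
  "forest_algebra F \<Longrightarrow> forest_algebra F' \<Longrightarrow> \<forall>a. \<forall>h\<in>Hc F. \<alpha> a h \<in> Hc F \<Longrightarrow>
    \<forall>a. \<forall>h\<in>Hc F. \<forall>h'\<in>Hc F'. \<beta> (a,h) h' \<in> Hc F' \<Longrightarrow>
   ev (wreath F F') (tensor F F' \<alpha> \<beta>) s = (ev F \<alpha> s, ev F' \<beta> (rl F \<alpha> s))"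
proof (induction F \<alpha> s rule: rl.induct)
  case (1 F \<alpha>)
  then show ?case by (simp add: wreath_def)
next
  case (2 F \<alpha> a u ts)
  have "\<forall>x\<in>labels_f u. \<forall>h\<in>Hc F. \<alpha> x h \<in> Hc F" using 2(5) by blast
  then have c1: "ev F \<alpha> u \<in> Hc F" by (rule ev_closed[OF 2(3)])
  have l: "labels_f (rl F \<alpha> u) \<subseteq> UNIV \<times> Hc F" using labels_rl[OF 2(3,5)] .
  have "\<forall>x\<in>labels_f (rl F \<alpha> u). \<forall>h\<in>Hc F'. \<beta> x h \<in> Hc F'" using l 2(6) by blast
  then have c2: "ev F' \<beta> (rl F \<alpha> u) \<in> Hc F'" by (rule ev_closed[OF 2(4)])
  have t: "tensor F F' \<alpha> \<beta> a (ev F \<alpha> u, ev F' \<beta> (rl F \<alpha> u)) = 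
     (\<alpha> a (ev F \<alpha> u), \<beta> (a, ev F \<alpha> u) (ev F' \<beta> (rl F \<alpha> u)))"
    using c1 c2 by (simp add: tensor_def)
  show ?case using 2(1,2)[OF 2(3-6)] t by (simp add: wreath_def)
qed


lemma bc_UNIV: "Z \<in> bool_comb B \<Longrightarrow> UNIV \<in> bool_comb B"
proof -
  assume z: "Z \<in> bool_comb B"
  have "Z \<union> - Z \<in> bool_comb B" using z by (intro bool_comb.union bool_comb.compl)
  then show ?thesis by simp
qed

lemma bc_empty: "Z \<in> bool_comb B \<Longrightarrow> {} \<in> bool_comb B"
proof -
  assume z: "Z \<in> bool_comb B"
  have "Z \<inter> - Z \<in> bool_comb B" using z by (intro bool_comb.inter bool_comb.compl)
  then show ?thesis by simp
qed

lemma bc_Inter: "finite I \<Longrightarrow> UNIV \<in> bool_comb B \<Longrightarrow> (\<forall>i\<in>I. f i \<in> bool_comb B)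
   \<Longrightarrow> (\<Inter>i\<in>I. f i) \<in> bool_comb B"
proof (induction I rule: finite_induct)
  case empty
  then show ?case by simp
next
  case (insert x F)
  then show ?case by (simp add: bool_comb.inter)
qed

lemma bc_Union: "finite S \<Longrightarrow> {} \<in> bool_comb B \<Longrightarrow> (\<forall>X\<in>S. X \<in> bool_comb B)
   \<Longrightarrow> \<Union>S \<in> bool_comb B"
proof (induction S rule: finite_induct)
  case empty
  then show ?case by simp
next
  case (insert x F)
  then show ?case by (simp add: bool_comb.union)
qed

lemma bool_comb_det:
  assumes fin: "finite B0" and sub: "B0 \<subseteq> B" and z0: "Z0 \<in> B0"
    and det: "\<forall>s t. (\<forall>Z\<in>B0. s\<in>Z \<longleftrightarrow> t\<in>Z) \<longrightarrow> (s\<in>Y \<longleftrightarrow> t\<in>Y)"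
  shows "Y \<in> bool_comb B"
proof -
  define at where "at T = (\<Inter>Z\<in>B0. if Z \<in> T then Z else -Z)" for T
  have zb: "Z0 \<in> bool_comb B" using z0 sub by (blast intro: bool_comb.base)
  have U: "UNIV \<in> bool_comb B" using bc_UNIV[OF zb] .
  have E: "{} \<in> bool_comb B" using bc_empty[OF zb] .
  have atbc: "at T \<in> bool_comb B" for T
    unfolding at_def
  proof (rule bc_Inter[OF fin U], rule ballI)
    fix Z assume "Z \<in> B0"
    then have "Z \<in> bool_comb B" using sub by (blast intro: bool_comb.base)
    then show "(if Z \<in> T then Z else - Z) \<in> bool_comb B" by (simp add: bool_comb.compl)
  qed
  define sg where "sg s = {Z\<in>B0. s \<in> Z}" for s
  have self: "s \<in> at (sg s)" for s unfolding at_def sg_def by auto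
  have agree: "t \<in> at (sg s) \<Longrightarrow> (\<forall>Z\<in>B0. s\<in>Z \<longleftrightarrow> t\<in>Z)" for s t
    unfolding at_def sg_def by (auto split: if_splits)
  have Yeq: "Y = \<Union>((\<lambda>s. at (sg s)) ` Y)"
  proof
    show "Y \<subseteq> \<Union>((\<lambda>s. at (sg s)) ` Y)" using self by blast
  next
    show "\<Union>((\<lambda>s. at (sg s)) ` Y) \<subseteq> Y"
    proof
      fix t assume "t \<in> \<Union>((\<lambda>s. at (sg s)) ` Y)"
      then obtain s where s: "s \<in> Y" "t \<in> at (sg s)" by blast
      have "\<forall>Z\<in>B0. s\<in>Z \<longleftrightarrow> t\<in>Z" using agree[OF s(2)] .
      then show "t \<in> Y" using det s(1) by blast
    qed
  qed
  have "(\<lambda>s. at (sg s)) ` Y \<subseteq> at ` Pow B0" unfolding sg_def by auto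
  then have fi: "finite ((\<lambda>s. at (sg s)) ` Y)" using fin by (meson finite_Pow_iff finite_imageI finite_subset)
  have "\<Union>((\<lambda>s. at (sg s)) ` Y) \<in> bool_comb B"
    by (rule bc_Union[OF fi E]) (use atbc in blast)
  then show ?thesis using Yeq by simp
qed

lemma sat_t_forest: "is_forest \<phi> \<Longrightarrow> sat_t \<phi> (Node a u) = sat_f \<phi> u"
  by (induction \<phi>) auto

lemma memEX: "is_forest \<phi> \<Longrightarrow>
   (s \<in> Lang (EXm (Conj (Lab a) \<phi>))) = (\<exists>u. Node a u \<in> set s \<and> sat_f \<phi> u)"
proof -
  assume f: "is_forest \<phi>"
  have "(s \<in> Lang (EXm (Conj (Lab a) \<phi>))) = (\<exists>t\<in>set s. root t = a \<and> sat_t \<phi> t)"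
    by (simp add: Lang_def)
  also have "\<dots> = (\<exists>u. Node a u \<in> set s \<and> sat_f \<phi> u)"
  proof
    assume "\<exists>t\<in>set s. root t = a \<and> sat_t \<phi> t"
    then obtain t where t: "t \<in> set s" "root t = a" "sat_t \<phi> t" by blast
    obtain b u where tb: "t = Node b u" by (cases t)
    show "\<exists>u. Node a u \<in> set s \<and> sat_f \<phi> u" using t tb sat_t_forest[OF f] by auto
  next
    assume "\<exists>u. Node a u \<in> set s \<and> sat_f \<phi> u"
    then show "\<exists>t\<in>set s. root t = a \<and> sat_t \<phi> t" using sat_t_forest[OF f] by force
  qed
  finally show ?thesis .
qed


lemma partB:
  fixes F :: "'h falg" and F' :: "'h2 falg" and \<alpha> :: "'a::finite \<Rightarrow> 'h \<Rightarrow> 'h"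
    and \<beta> :: "'a \<times> 'h \<Rightarrow> 'h2 \<Rightarrow> 'h2" and L :: "'a forest set" and \<Psi> :: "'a fml set"
  assumes ffa: "finite_forest_algebra F" and ffa': "finite_forest_algebra F'"
    and hom: "hom F \<alpha> UNIV" and hom': "hom F' \<beta> (UNIV \<times> Hc F)" and od: "one_definite F' (Hc F) \<beta>"
    and rec: "recognizes (wreath F F') (tensor F F' \<alpha> \<beta>) L"
    and forest: "\<forall>\<psi>\<in>\<Psi>. is_forest \<psi>"
    and defin: "\<forall>L'. recognizes F \<alpha> L' \<longrightarrow> (\<exists>\<psi>\<in>\<Psi>. L' = Lang \<psi>)"
  shows "L \<in> bool_comb ({Lang \<psi> | \<psi>. \<psi> \<in> \<Psi>} \<union>
                              {Lang (EXm (Conj (Lab a) \<psi>)) | a \<psi>. \<psi> \<in> \<Psi>})"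
proof -
  have fa: "forest_algebra F" and finH: "finite (Hc F)" using ffa by (simp_all add: finite_forest_algebra_def)
  have fa': "forest_algebra F'" using ffa' by (simp add: finite_forest_algebra_def)
  obtain X where L: "L = ev (wreath F F') (tensor F F' \<alpha> \<beta>) -` X" using rec by (auto simp: recognizes_def)
  have aclo: "\<forall>a. \<forall>h\<in>Hc F. \<alpha> a h \<in> Hc F" using hom_closed[OF fa hom] by simp
  have bclo: "\<forall>a. \<forall>h\<in>Hc F. \<forall>h'\<in>Hc F'. \<beta> (a,h) h' \<in> Hc F'" using hom_closed[OF fa' hom'] by simp
  have evc: "ev F \<alpha> s \<in> Hc F" for s
  proof (rule ev_closed[OF fa])
    show "\<forall>x\<in>labels_f s. \<forall>h\<in>Hc F. \<alpha> x h \<in> Hc F" using aclo by simp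
  qed
  have "\<forall>h. \<exists>\<psi>. \<psi> \<in> \<Psi> \<and> ev F \<alpha> -` {h} = Lang \<psi>"
  proof
    fix h
    have "recognizes F \<alpha> (ev F \<alpha> -` {h})" unfolding recognizes_def by blast
    then show "\<exists>\<psi>. \<psi> \<in> \<Psi> \<and> ev F \<alpha> -` {h} = Lang \<psi>" using defin by blast
  qed
  then obtain \<psi> where \<psi>: "\<And>h. \<psi> h \<in> \<Psi>" "\<And>h. ev F \<alpha> -` {h} = Lang (\<psi> h)" by metis
  have satpsi: "sat_f (\<psi> h) u = (ev F \<alpha> u = h)" for h u
  proof -
    have "(u \<in> ev F \<alpha> -` {h}) = (u \<in> Lang (\<psi> h))" using \<psi>(2) by simp
    then show ?thesis by (simp add: Lang_def)
  qed
  define B0 where "B0 = (\<lambda>h. Lang (\<psi> h)) ` Hc F \<union>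
      (\<lambda>(a,h). Lang (EXm (Conj (Lab a) (\<psi> h)))) ` (UNIV \<times> Hc F)"
  have finB0: "finite B0" unfolding B0_def using finH by simp
  have subB0: "B0 \<subseteq> {Lang \<psi> | \<psi>. \<psi> \<in> \<Psi>} \<union> {Lang (EXm (Conj (Lab a) \<psi>)) | a \<psi>. \<psi> \<in> \<Psi>}"
  proof -
    have 1: "Lang (\<psi> h) \<in> {Lang \<psi> | \<psi>. \<psi> \<in> \<Psi>}" for h using \<psi>(1) by blast
    have 2: "Lang (EXm (Conj (Lab a) (\<psi> h))) \<in> {Lang (EXm (Conj (Lab a) \<psi>)) | a \<psi>. \<psi> \<in> \<Psi>}" for a h
      using \<psi>(1) by blast
    show ?thesis unfolding B0_def using 1 2 by auto
  qed
  have z: "Lang (\<psi> (zro F)) \<in> B0" unfolding B0_def using fa_zro[OF fa] by blast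
  have memroot: "(s \<in> Lang (EXm (Conj (Lab a) (\<psi> h)))) = ((a,h) \<in> roots (rl F \<alpha> s))" for s a h
  proof -
    have "is_forest (\<psi> h)" using forest \<psi>(1) by blast
    then have "(s \<in> Lang (EXm (Conj (Lab a) (\<psi> h)))) = (\<exists>u. Node a u \<in> set s \<and> ev F \<alpha> u = h)"
      by (simp only: memEX[OF \<open>is_forest (\<psi> h)\<close>] satpsi)
    then show ?thesis by (auto simp: roots_rl)
  qed
  have rootsH: "roots (rl F \<alpha> s) \<subseteq> UNIV \<times> Hc F" for s
    unfolding roots_rl using evc by blast
  have det: "\<forall>s t. (\<forall>Z\<in>B0. s\<in>Z \<longleftrightarrow> t\<in>Z) \<longrightarrow> (s\<in>L \<longleftrightarrow> t\<in>L)"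
  proof (intro allI impI)
    fix s t assume ag: "\<forall>Z\<in>B0. s\<in>Z \<longleftrightarrow> t\<in>Z"
    have "Lang (\<psi> (ev F \<alpha> s)) \<in> B0" unfolding B0_def using evc by blast
    then have "(s \<in> Lang (\<psi> (ev F \<alpha> s))) = (t \<in> Lang (\<psi> (ev F \<alpha> s)))" using ag by blast
    then have e1: "ev F \<alpha> s = ev F \<alpha> t" using satpsi by (simp add: Lang_def)
    have e2: "roots (rl F \<alpha> s) = roots (rl F \<alpha> t)"
    proof -
      have "x \<in> roots (rl F \<alpha> s) \<longleftrightarrow> x \<in> roots (rl F \<alpha> t)" if x: "x \<in> UNIV \<times> Hc F" for x
      proof -
        obtain a h where xa: "x = (a,h)" and h: "h \<in> Hc F" using x by blast
        have "Lang (EXm (Conj (Lab a) (\<psi> h))) \<in> B0" unfolding B0_def using h by blast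
        then have "(s \<in> Lang (EXm (Conj (Lab a) (\<psi> h)))) = (t \<in> Lang (EXm (Conj (Lab a) (\<psi> h))))"
          using ag by blast
        then show ?thesis using memroot xa by simp
      qed
      then show ?thesis using rootsH by blast
    qed
    have od': "\<And>s t. labels_f s \<subseteq> UNIV \<times> Hc F \<Longrightarrow> labels_f t \<subseteq> UNIV \<times> Hc F \<Longrightarrow>
            roots s = roots t \<Longrightarrow> ev F' \<beta> s = ev F' \<beta> t" using od unfolding one_definite_def by blast
    have e3: "ev F' \<beta> (rl F \<alpha> s) = ev F' \<beta> (rl F \<alpha> t)"
      by (rule od'[OF labels_rl[OF fa aclo] labels_rl[OF fa aclo] e2])
    have "ev (wreath F F') (tensor F F' \<alpha> \<beta>) s = ev (wreath F F') (tensor F F' \<alpha> \<beta>) t"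
      using ev_wreath[OF fa fa' aclo bclo] e1 e3 by simp
    then show "s\<in>L \<longleftrightarrow> t\<in>L" using L by simp
  qed
  show ?thesis by (rule bool_comb_det[OF finB0 subB0 z det])
qed


lemma partA:
  fixes F :: "'h falg" and \<alpha> :: "'a \<Rightarrow> 'h \<Rightarrow> 'h" and \<phi> :: "'a fml" and \<psi> :: "'a \<Rightarrow> 'a fml"
  assumes fa: "forest_algebra F" and hom: "hom F \<alpha> UNIV"
    and phi: "\<forall>a s. sat_t \<phi> (Node a s) \<longleftrightarrow> sat_f (\<psi> a) s"
    and inv: "\<forall>s t. ev F \<alpha> s = ev F \<alpha> t \<longrightarrow> (\<forall>a. sat_f (\<psi> a) s \<longleftrightarrow> sat_f (\<psi> a) t)"
  shows "\<exists>(F' :: ('a \<times> 'h) set falg) \<beta>.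
                 finite_forest_algebra F' \<and> hom F' \<beta> (UNIV \<times> Hc F) \<and>
                 one_definite F' (Hc F) \<beta> \<and>
                 recognizes (wreath F F') (tensor F F' \<alpha> \<beta>) (Lang (EXm \<phi>))"
proof -
  define M :: "('a \<times> 'h) set" where "M = {undefined}"
  define H' where "H' = {{}, M}"
  define F' :: "('a \<times> 'h) set falg" where "F' = \<lparr>Hc = H', zro = {}, pls = (\<union>), Vc = H' \<rightarrow>\<^sub>E H'\<rparr>"
  define P where "P = (\<lambda>a h. \<exists>s. ev F \<alpha> s = h \<and> sat_f (\<psi> a) s)"
  define \<beta> where "\<beta> = (\<lambda>x. restrict (\<lambda>_::('a \<times> 'h) set. if P (fst x) (snd x) then M else {}) H')"
  have Mne: "M \<noteq> {}" unfolding M_def by simp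
  have HF': "Hc F' = H'" "zro F' = {}" "pls F' = (\<union>)" "Vc F' = H' \<rightarrow>\<^sub>E H'" unfolding F'_def by simp_all
  have unH: "g \<union> h \<in> H'" if "g \<in> H'" "h \<in> H'" for g h using that unfolding H'_def by (elim insertE emptyE) simp_all
  have fa': "forest_algebra F'"
    unfolding forest_algebra_def HF'
  proof (intro conjI ballI)
    show "{} \<in> H'" unfolding H'_def by simp
    show "restrict id H' \<in> H' \<rightarrow>\<^sub>E H'" by simp
  next
    fix v w assume "v \<in> H' \<rightarrow>\<^sub>E H'" "w \<in> H' \<rightarrow>\<^sub>E H'"
    then show "compose H' v w \<in> H' \<rightarrow>\<^sub>E H'" by (auto simp: compose_def)
  next
    fix h assume h: "h \<in> H'"
    show "(\<lambda>g\<in>H'. g \<union> h) \<in> H' \<rightarrow>\<^sub>E H'" using unH h by simp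
    show "(\<lambda>g\<in>H'. h \<union> g) \<in> H' \<rightarrow>\<^sub>E H'" using unH h by simp
  qed (auto simp: unH)
  have ffa': "finite_forest_algebra F'"
    unfolding finite_forest_algebra_def HF'
  proof (intro conjI fa')
    show "finite H'" unfolding H'_def by simp
    show "\<forall>h\<in>H'. h \<union> h = h" by simp
    show "\<forall>g\<in>H'. \<forall>h\<in>H'. g \<union> h = h \<union> g" by blast
  qed
  have bclo: "\<beta> x h \<in> H'" if "h \<in> H'" for x h
  proof -
    have "\<beta> x h = (if P (fst x) (snd x) then M else {})" using that unfolding \<beta>_def by simp
    then show ?thesis unfolding H'_def by simp
  qed
  have bval: "\<beta> x h = (if P (fst x) (snd x) then M else {})" if "h \<in> H'" for x h
    using that unfolding \<beta>_def by simp
  have hom': "hom F' \<beta> (UNIV \<times> Hc F)"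
    unfolding hom_def HF'
  proof
    fix x
    show "\<beta> x \<in> H' \<rightarrow>\<^sub>E H'" unfolding \<beta>_def restrict_PiE_iff H'_def by simp
  qed
  have evb: "ev F' \<beta> s = (if \<exists>r\<in>roots s. P (fst r) (snd r) then M else {})" for s
  proof (induction s)
    case Nil
    then show ?case by (simp add: HF' roots_def)
  next
    case (Cons t ts)
    obtain x u where t: "t = Node x u" by (cases t)
    have e: "ev F' \<beta> u \<in> Hc F'" by (rule ev_closed[OF fa']) (simp add: HF' bclo)
    have b: "\<beta> x (ev F' \<beta> u) = (if P (fst x) (snd x) then M else {})"
      by (rule bval) (use e in \<open>simp only: HF'\<close>)
    have r: "roots (t # ts) = insert x (roots ts)" unfolding roots_def t by simp
    have "ev F' \<beta> (t # ts) = \<beta> x (ev F' \<beta> u) \<union> ev F' \<beta> ts" unfolding t by (simp add: HF')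
    then show ?case unfolding b Cons r by simp
  qed
  have od: "one_definite F' (Hc F) \<beta>"
    unfolding one_definite_def using evb by simp
  have aclo: "\<forall>a. \<forall>h\<in>Hc F. \<alpha> a h \<in> Hc F" using hom_closed[OF fa hom] by simp
  have bclo2: "\<forall>a. \<forall>h\<in>Hc F. \<forall>h'\<in>Hc F'. \<beta> (a,h) h' \<in> Hc F'"
    unfolding HF' by (intro allI ballI bclo)
  have Pu: "P a (ev F \<alpha> u) = sat_t \<phi> (Node a u)" for a u
  proof
    assume "P a (ev F \<alpha> u)"
    then obtain s' where s': "ev F \<alpha> s' = ev F \<alpha> u" "sat_f (\<psi> a) s'" unfolding P_def by blast
    have "sat_f (\<psi> a) s' = sat_f (\<psi> a) u" using inv[rule_format, OF s'(1)] by simp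
    then show "sat_t \<phi> (Node a u)" using phi s'(2) by simp
  next
    assume "sat_t \<phi> (Node a u)"
    then have "sat_f (\<psi> a) u" using phi by simp
    then show "P a (ev F \<alpha> u)" unfolding P_def by blast
  qed
  have "Lang (EXm \<phi>) = ev (wreath F F') (tensor F F' \<alpha> \<beta>) -` (UNIV \<times> {M})"
  proof (rule set_eqI)
    fix s
    have "(s \<in> ev (wreath F F') (tensor F F' \<alpha> \<beta>) -` (UNIV \<times> {M})) =
          (\<exists>r\<in>roots (rl F \<alpha> s). P (fst r) (snd r))"
      using ev_wreath[OF fa fa' aclo bclo2, of s] evb Mne by simp
    also have "\<dots> = (\<exists>a u. Node a u \<in> set s \<and> sat_t \<phi> (Node a u))"
      unfolding roots_rl using Pu by auto
    also have "\<dots> = (s \<in> Lang (EXm \<phi>))"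
    proof
      assume "\<exists>a u. Node a u \<in> set s \<and> sat_t \<phi> (Node a u)"
      then show "s \<in> Lang (EXm \<phi>)" by (auto simp: Lang_def)
    next
      assume "s \<in> Lang (EXm \<phi>)"
      then obtain t where t: "t \<in> set s" "sat_t \<phi> t" by (auto simp: Lang_def)
      obtain a u where "t = Node a u" by (cases t)
      then show "\<exists>a u. Node a u \<in> set s \<and> sat_t \<phi> (Node a u)" using t by blast
    qed
    finally show "s \<in> Lang (EXm \<phi>) \<longleftrightarrow> s \<in> ev (wreath F F') (tensor F F' \<alpha> \<beta>) -` (UNIV \<times> {M})" by simp
  qed
  then have "recognizes (wreath F F') (tensor F F' \<alpha> \<beta>) (Lang (EXm \<phi>))"
    unfolding recognizes_def by blast
  then show ?thesis by (intro exI[of _ F'] exI[of _ \<beta>] conjI ffa' hom' od)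
qed

theorem proposition2:
  shows "(\<forall>(F :: 'h falg) (\<alpha> :: 'a::finite \<Rightarrow> 'h \<Rightarrow> 'h) (\<phi> :: 'a fml) (\<psi> :: 'a \<Rightarrow> 'a fml).
            forest_algebra F \<and> hom F \<alpha> UNIV \<and>
            (\<forall>a. is_forest (\<psi> a)) \<and>
            (\<forall>a s. sat_t \<phi> (Node a s) \<longleftrightarrow> sat_f (\<psi> a) s) \<and>
            (\<forall>s t. ev F \<alpha> s = ev F \<alpha> t \<longrightarrow> (\<forall>a. sat_f (\<psi> a) s \<longleftrightarrow> sat_f (\<psi> a) t))
          \<longrightarrow> (\<exists>(F' :: ('a \<times> 'h) set falg) \<beta>.
                 finite_forest_algebra F' \<and> hom F' \<beta> (UNIV \<times> Hc F) \<and>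
                 one_definite F' (Hc F) \<beta> \<and>
                 recognizes (wreath F F') (tensor F F' \<alpha> \<beta>) (Lang (EXm \<phi>))))
       \<and>
       (\<forall>(F :: 'h falg) (F' :: 'h2 falg) (\<alpha> :: 'a \<Rightarrow> 'h \<Rightarrow> 'h) (\<beta> :: 'a \<times> 'h \<Rightarrow> 'h2 \<Rightarrow> 'h2)
           (L :: 'a forest set) (\<Psi> :: 'a fml set).
            finite_forest_algebra F \<and> finite_forest_algebra F' \<and>
            hom F \<alpha> UNIV \<and> hom F' \<beta> (UNIV \<times> Hc F) \<and> one_definite F' (Hc F) \<beta> \<and>
            recognizes (wreath F F') (tensor F F' \<alpha> \<beta>) L \<and>
            (\<forall>\<psi>\<in>\<Psi>. is_forest \<psi>) \<and>
            (\<forall>L'. recognizes F \<alpha> L' \<longrightarrow> (\<exists>\<psi>\<in>\<Psi>. L' = Lang \<psi>))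
          \<longrightarrow> L \<in> bool_comb ({Lang \<psi> | \<psi>. \<psi> \<in> \<Psi>} \<union>
                              {Lang (EXm (Conj (Lab a) \<psi>)) | a \<psi>. \<psi> \<in> \<Psi>}))"
proof (intro conjI allI impI)
  fix F :: "'h falg" and \<alpha> :: "'a \<Rightarrow> 'h \<Rightarrow> 'h" and \<phi> :: "'a fml" and \<psi> :: "'a \<Rightarrow> 'a fml"
  assume "forest_algebra F \<and> hom F \<alpha> UNIV \<and>
            (\<forall>a. is_forest (\<psi> a)) \<and>
            (\<forall>a s. sat_t \<phi> (Node a s) \<longleftrightarrow> sat_f (\<psi> a) s) \<and>
            (\<forall>s t. ev F \<alpha> s = ev F \<alpha> t \<longrightarrow> (\<forall>a. sat_f (\<psi> a) s \<longleftrightarrow> sat_f (\<psi> a) t))"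
  then show "\<exists>(F' :: ('a \<times> 'h) set falg) \<beta>.
                 finite_forest_algebra F' \<and> hom F' \<beta> (UNIV \<times> Hc F) \<and>
                 one_definite F' (Hc F) \<beta> \<and>
                 recognizes (wreath F F') (tensor F F' \<alpha> \<beta>) (Lang (EXm \<phi>))"
    by (elim conjE) (rule partA)
next
  fix F :: "'h falg" and F' :: "'h2 falg" and \<alpha> :: "'a \<Rightarrow> 'h \<Rightarrow> 'h" and \<beta> :: "'a \<times> 'h \<Rightarrow> 'h2 \<Rightarrow> 'h2"
    and L :: "'a forest set" and \<Psi> :: "'a fml set"
  assume "finite_forest_algebra F \<and> finite_forest_algebra F' \<and>
            hom F \<alpha> UNIV \<and> hom F' \<beta> (UNIV \<times> Hc F) \<and> one_definite F' (Hc F) \<beta> \<and>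
            recognizes (wreath F F') (tensor F F' \<alpha> \<beta>) L \<and>
            (\<forall>\<psi>\<in>\<Psi>. is_forest \<psi>) \<and>
            (\<forall>L'. recognizes F \<alpha> L' \<longrightarrow> (\<exists>\<psi>\<in>\<Psi>. L' = Lang \<psi>))"
  then show "L \<in> bool_comb ({Lang \<psi> | \<psi>. \<psi> \<in> \<Psi>} \<union>
                              {Lang (EXm (Conj (Lab a) \<psi>)) | a \<psi>. \<psi> \<in> \<Psi>})"
    by (elim conjE) (rule partB)
qed

end
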